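(* Let $r\in[0,1]^n$ with $r\neq 0$, let $k\in\{1,\dots,n\}$, and let $D:\{1,\dots,n\}\to(0,\infty)$ be non-increasing. Let $\sigma_r$ be a permutation ordering $r$, and define the NDCG loss of a permutation $\sigma$ by $$\mathcal L(\sigma)=\frac{\sum_{i=1}^k r(\sigma_r(i))D(i)-\sum_{i=1}^k r(\sigma(i))D(i)}{\sum_{i=1}^k r(\sigma_r(i))D(i)}.$$ Let $G(0)=0$, $G(i)=\sum_{j=1}^i D(j)$, and $f(X)=G(\min\{|X|,k\})$ for $X\subseteq V$. Then $f$ is submodular, and for every permutation $\sigma$ of $V$, $$\mathcal L(\sigma)=\frac{d_{\hat f}(r\|\sigma)}{\sum_{i=1}^k r(\sigma_r(i))D(i)}.$$
   Context: Let $V=\{1,\dots,n\}$. A permutation $\sigma$ is a bijection $V\to V$, where $\sigma(i)$ is the element placed at rank $i$. Write $S^\sigma_0=\emptyset$, $S^\sigma_j=\{\sigma(1),\dots,\sigma(j)\}$. For $f:2^V\to\mathbb{R}$ define $h^f_\sigma\in\mathbb{R}^n$ by $h^f_\sigma(\sigma(j))=f(S^\sigma_j)-f(S^\sigma_{j-1})$. For $x\in\mathbb{R}^n$, $\sigma_x$ orders $x$ if $x(\sigma_x(1))\ge\cdots\ge x(\sigma_x(n))$; the Lovász extension is $\hat f(x)=\langle x,h^f_{\sigma_x}\rangle$ (independent of the choice of $\sigma_x$). $f$ is submodular if $f(S)+f(T)\ge f(S\cup T)+f(S\cap T)$ for all $S,T$. The LB divergence is $d_{\hat f}(x\|\sigma)=\hat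 f(x)-\langle x,h^f_\sigma\rangle$ for $x\in[0,1]^n$. *)

theory Defs
  imports "HOL-Analysis.Analysis"
begin

text \<open>Ground set V = {1..n}; vectors in R^n are functions nat => real (only values on {1..n} matter);
  permutations of V are bijections {1..n} -> {1..n}, sigma i = element at rank i.\<close>

definition is_perm :: "nat \<Rightarrow> (nat \<Rightarrow> nat) \<Rightarrow> bool" where
  "is_perm n \<sigma> \<longleftrightarrow> bij_betw \<sigma> {1..n} {1..n}"

definition prefix_set :: "(nat \<Rightarrow> nat) \<Rightarrow> nat \<Rightarrow> nat set" where
  "prefix_set \<sigma> j = \<sigma> ` {1..j}"

definition hvec :: "(nat set \<Rightarrow> real) \<Rightarrow> nat \<Rightarrow> (nat \<Rightarrow> nat) \<Rightarrow> nat \<Rightarrow> real" where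
  "hvec f n \<sigma> v = (let j = inv_into {1..n} \<sigma> v in f (prefix_set \<sigma> j) - f (prefix_set \<sigma> (j - 1)))"

definition inner_n :: "nat \<Rightarrow> (nat \<Rightarrow> real) \<Rightarrow> (nat \<Rightarrow> real) \<Rightarrow> real" where
  "inner_n n x y = (\<Sum>i\<in>{1..n}. x i * y i)"

definition orders :: "nat \<Rightarrow> (nat \<Rightarrow> real) \<Rightarrow> (nat \<Rightarrow> nat) \<Rightarrow> bool" where
  "orders n x \<sigma> \<longleftrightarrow> is_perm n \<sigma> \<and> (\<forall>i j. 1 \<le> i \<and> i \<le> j \<and> j \<le> n \<longrightarrow> x (\<sigma> j) \<le> x (\<sigma> i))"

definition lovasz :: "(nat set \<Rightarrow> real) \<Rightarrow> nat \<Rightarrow> (nat \<Rightarrow> real) \<Rightarrow> real" where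
  "lovasz f n x = inner_n n x (hvec f n (SOME \<sigma>. orders n x \<sigma>))"

definition submodular :: "nat \<Rightarrow> (nat set \<Rightarrow> real) \<Rightarrow> bool" where
  "submodular n f \<longleftrightarrow> (\<forall>S T. S \<subseteq> {1..n} \<and> T \<subseteq> {1..n} \<longrightarrow> f S + f T \<ge> f (S \<union> T) + f (S \<inter> T))"

definition lb_div :: "(nat set \<Rightarrow> real) \<Rightarrow> nat \<Rightarrow> (nat \<Rightarrow> real) \<Rightarrow> (nat \<Rightarrow> nat) \<Rightarrow> real" where
  "lb_div f n x \<sigma> = lovasz f n x - inner_n n x (hvec f n \<sigma>)"

definition ndcg_loss :: "nat \<Rightarrow> (nat \<Rightarrow> real) \<Rightarrow> (nat \<Rightarrow> real) \<Rightarrow> (nat \<Rightarrow> nat) \<Rightarrow> (nat \<Rightarrow> nat) \<Rightarrow> real" where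
  "ndcg_loss k D r \<sigma>r \<sigma> =
     ((\<Sum>i=1..k. r (\<sigma>r i) * D i) - (\<Sum>i=1..k. r (\<sigma> i) * D i)) / (\<Sum>i=1..k. r (\<sigma>r i) * D i)"

end

theory Submission
  imports Defs
begin

lemma sorted_eq_aux:
  fixes a b :: "nat \<Rightarrow> real"
  assumes p1: "orders n r s1" and p2: "orders n r s2" and i: "i \<in> {1..n}"
  shows "r (s1 i) = r (s2 i)"
proof -
  have b1: "bij_betw s1 {1..n} {1..n}" and b2: "bij_betw s2 {1..n} {1..n}"
    using p1 p2 by (auto simp: orders_def is_perm_def)
  define l1 where "l1 = map (\<lambda>j. - r (s1 j)) [1..<Suc n]"
  define l2 where "l2 = map (\<lambda>j. - r (s2 j)) [1..<Suc n]"
  have ms: "mset (map s1 [1..<Suc n]) = mset (map s2 [1..<Suc n])" if "bij_betw s1 {1..n} {1..n}" "bij_betw s2 {1..n} {1..n}" for s1 s2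
  proof -
    have U: "mset [1..<Suc n] = mset_set {1..n}"
      by (metis atLeastLessThanSuc_atLeastAtMost distinct_upt mset_set_set set_upt)
    have "mset (map s1 [1..<Suc n]) = image_mset s1 (mset_set {1..n})"
      by (simp only: mset_map U)
    also have "\<dots> = mset_set {1..n}"
      using that by (simp add: image_mset_mset_set bij_betw_def)
    finally have A: "mset (map s1 [1..<Suc n]) = mset_set {1..n}" .
    have "mset (map s2 [1..<Suc n]) = image_mset s2 (mset_set {1..n})"
      by (simp only: mset_map U)
    also have "\<dots> = mset_set {1..n}"
      using that by (simp add: image_mset_mset_set bij_betw_def)
    finally show ?thesis using A by simp
  qed
  have "mset l1 = image_mset (\<lambda>v. - r v) (mset (map s1 [1..<Suc n]))"
    by (simp add: l1_def mset_map image_mset.compositionality o_def)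
  also have "\<dots> = image_mset (\<lambda>v. - r v) (mset (map s2 [1..<Suc n]))"
    using ms[OF b1 b2] by simp
  also have "\<dots> = mset l2"
    by (simp add: l2_def mset_map image_mset.compositionality o_def)
  finally have m: "mset l1 = mset l2" .
  have so1: "sorted l1" unfolding l1_def sorted_iff_nth_mono
    using p1 by (auto simp: orders_def simp del: upt_Suc)
  have so2: "sorted l2" unfolding l2_def sorted_iff_nth_mono
    using p2 by (auto simp: orders_def simp del: upt_Suc)
  have "l1 = l2" using m so1 so2 properties_for_sort by metis
  hence "l1 ! (i - 1) = l2 ! (i - 1)" by simp
  moreover have "[1..<Suc n] ! (i-1) = i" "i - 1 < length [1..<Suc n]" using i by (auto simp del: upt_Suc simp add: nth_upt)
  ultimately show ?thesis unfolding l1_def l2_def by (simp only: nth_map)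
qed

lemma inner_hvec:
  fixes D :: "nat \<Rightarrow> real" and G :: "nat \<Rightarrow> real"
  assumes k: "1 \<le> k" "k \<le> n"
    and G_def: "\<forall>i. G i = (\<Sum>j=1..i. D j)"
    and f_def: "\<forall>X. f X = G (min (card X) k)"
    and p: "is_perm n \<sigma>"
  shows "inner_n n x (hvec f n \<sigma>) = (\<Sum>j=1..k. x (\<sigma> j) * D j)"
proof -
  have b: "bij_betw \<sigma> {1..n} {1..n}" using p by (simp add: is_perm_def)
  hence inj: "inj_on \<sigma> {1..n}" by (simp add: bij_betw_def)
  have cardp: "card (prefix_set \<sigma> j) = j" if "j \<le> n" for j
  proof -
    have "inj_on \<sigma> {1..j}" by (rule inj_on_subset[OF inj]) (use that in auto)
    thus ?thesis by (simp add: prefix_set_def card_image)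
  qed
  have h: "hvec f n \<sigma> (\<sigma> j) = (if j \<le> k then D j else 0)" if "j \<in> {1..n}" for j
  proof -
    have iv: "inv_into {1..n} \<sigma> (\<sigma> j) = j" using inj that by (simp add: inv_into_f_f)
    have "hvec f n \<sigma> (\<sigma> j) = G (min j k) - G (min (j-1) k)"
    proof -
      have c1: "card (prefix_set \<sigma> (j-1)) = j - 1" using that by (intro cardp) auto
      show ?thesis unfolding hvec_def Let_def iv using that c1 by (simp add: f_def cardp)
    qed
    also have "\<dots> = (if j \<le> k then D j else 0)"
    proof (cases "j \<le> k")
      case True
      obtain m where jm: "j = Suc m" using \<open>j \<in> {1..n}\<close> by (cases j) auto
      show ?thesis using True by (simp add: jm G_def min_def)
    next
      case False
      hence "j - 1 \<ge> k" by simp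
      thus ?thesis using False by (simp add: min_def)
    qed
    finally show ?thesis .
  qed
  have "inner_n n x (hvec f n \<sigma>) = (\<Sum>j\<in>{1..n}. x (\<sigma> j) * hvec f n \<sigma> (\<sigma> j))"
    unfolding inner_n_def using sum.reindex_bij_betw[OF b, of "\<lambda>v. x v * hvec f n \<sigma> v"] by simp
  also have "\<dots> = (\<Sum>j\<in>{1..n}. if j \<le> k then x (\<sigma> j) * D j else 0)"
    by (rule sum.cong) (auto simp: h)
  also have "\<dots> = (\<Sum>j\<in>{1..n} \<inter> {j. j \<le> k}. x (\<sigma> j) * D j)"
    by (simp add: sum.inter_restrict)
  also have "{1..n} \<inter> {j. j \<le> k} = {1..k}" using k by auto
  finally show ?thesis .
qed

theorem mainTheorem11:
  fixes n k :: nat and r D :: "nat \<Rightarrow> real" and \<sigma>r :: "nat \<Rightarrow> nat"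
    and f :: "nat set \<Rightarrow> real" and G :: "nat \<Rightarrow> real"
  assumes r01: "\<forall>i\<in>{1..n}. 0 \<le> r i \<and> r i \<le> 1"
    and rnz: "\<exists>i\<in>{1..n}. r i \<noteq> 0"
    and k: "1 \<le> k" "k \<le> n"
    and Dpos: "\<forall>i\<in>{1..n}. D i > 0"
    and Dmono: "\<forall>i\<in>{1..n}. \<forall>j\<in>{1..n}. i \<le> j \<longrightarrow> D j \<le> D i"
    and ord: "orders n r \<sigma>r"
    and G_def: "\<forall>i. G i = (\<Sum>j=1..i. D j)"
    and f_def: "\<forall>X. f X = G (min (card X) k)"
  shows "submodular n f \<and>
    (\<forall>\<sigma>. is_perm n \<sigma> \<longrightarrow>
       ndcg_loss k D r \<sigma>r \<sigma> = lb_div f n r \<sigma> / (\<Sum>i=1..k. r (\<sigma>r i) * D i))"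
proof
  define g where "g m = G (min m k)" for m
  define inc where "inc m = (if m < k then D (Suc m) else 0)" for m
  have ginc: "g (Suc m) = g m + inc m" for m
    by (cases "m < k") (auto simp: g_def inc_def G_def min_def)
  have incmono: "inc m' \<le> inc m" if "m \<le> m'" for m m'
  proof (cases "m < k")
    case True
    hence "D (Suc m) > 0" using k Dpos by auto
    thus ?thesis using that k Dmono True by (auto simp: inc_def)
  qed (use that in \<open>auto simp: inc_def\<close>)
  have gd: "g (a + d) - g a \<ge> g (b + d) - g b" if "a \<le> b" for a b d
  proof (induction d)
    case (Suc d)
    have "inc (b + d) \<le> inc (a + d)" using that by (intro incmono) simp
    thus ?case using Suc by (simp add: ginc)
  qed simp
  show "submodular n f"
    unfolding submodular_def
  proof (intro allI impI)
    fix S T :: "nat set" assume ST: "S \<subseteq> {1..n} \<and> T \<subseteq> {1..n}"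
    hence fin: "finite S" "finite T" by (auto intro: finite_subset)
    have cu: "card (S \<union> T) + card (S \<inter> T) = card S + card T"
      using fin card_Un_Int by metis
    have c1: "card (S \<inter> T) \<le> card S" and c2: "card (S \<inter> T) \<le> card T"
      using fin by (auto intro: card_mono)
    have "g (card (S \<inter> T) + (card S - card (S \<inter> T))) - g (card (S \<inter> T))
       \<ge> g (card T + (card S - card (S \<inter> T))) - g (card T)"
      using gd c2 by blast
    moreover have "card (S \<inter> T) + (card S - card (S \<inter> T)) = card S" using c1 by simp
    moreover have "card T + (card S - card (S \<inter> T)) = card (S \<union> T)" using cu c1 by simp
    ultimately show "f (S \<union> T) + f (S \<inter> T) \<le> f S + f T"
      by (simp add: f_def g_def)
  qed
next
  show "\<forall>\<sigma>. is_perm n \<sigma> \<longrightarrow>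
       ndcg_loss k D r \<sigma>r \<sigma> = lb_div f n r \<sigma> / (\<Sum>i=1..k. r (\<sigma>r i) * D i)"
  proof (intro allI impI)
    fix \<sigma> assume p: "is_perm n \<sigma>"
    define s' where "s' = (SOME \<sigma>. orders n r \<sigma>)"
    have os: "orders n r s'" unfolding s'_def using ord by (metis someI)
    have "lovasz f n r = (\<Sum>j=1..k. r (s' j) * D j)"
      unfolding lovasz_def s'_def[symmetric]
      using inner_hvec[OF k G_def f_def] os by (simp add: orders_def)
    also have "\<dots> = (\<Sum>j=1..k. r (\<sigma>r j) * D j)"
      by (rule sum.cong) (use sorted_eq_aux[OF os ord] k in auto)
    finally have L: "lovasz f n r = (\<Sum>j=1..k. r (\<sigma>r j) * D j)" .
    show "ndcg_loss k D r \<sigma>r \<sigma> = lb_div f n r \<sigma> / (\<Sum>i=1..k. r (\<sigma>r i) * D i)"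
      unfolding ndcg_loss_def lb_div_def L inner_hvec[OF k G_def f_def p] ..
  qed
qed

end
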